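(* Consider a multi-sender single-uniprior index-coding instance with binary messages, information-flow graph $\mathcal{G}$ and message graph $\mathcal{U}$, and let $\mathcal{V}_S$ be the vertex set of a degenerated leaf SCC of $\mathcal{G}$, with witnessing sets $\mathcal{V}_{\mathrm{inside}}$ and $\mathcal{V}_{\mathrm{outside}}$. Form $(\mathcal{G}',\mathcal{U}')$ by appending this leaf SCC: pick any $v_{\mathrm{inside}}\in\mathcal{V}_{\mathrm{inside}}$; if $\mathcal{V}_{\mathrm{outside}}$ contains exactly one non-leaf vertex, add an arc from $v_{\mathrm{inside}}$ to that vertex; otherwise (all vertices of $\mathcal{V}_{\mathrm{outside}}$ are leaves) add an arc from $v_{\mathrm{inside}}$ to an arbitrarily chosen vertex of $\mathcal{V}_{\mathrm{outside}}$. The message graph and senders are unchanged ($\mathcal{U}'=\mathcal{U}$). Then \[ N_{\mathrm{SCC}}(\mathcal{G}')\in\{N_{\mathrm{SCC}}(\mathcal{G}),\,N_{\mathrm{SCC}}(\mathcal{G})-1\},\qquad \tilde{\ell}^*(\mathcal{G}',\mathcal{U}')=\tilde{\ell}^*(\mathcal{G},\mathcal{U}),\qquad V_{\mathrm{out}}(\mathcal{G}')=V_{\mathrm{out}}(\mathcal{G}), \] where $N_{\mathrm{SCC}}(\cdot)$ denotes the number of leaf SCCs.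
   Context: Multi-sender single-uniprior index coding with binary messages: there are $n$ receivers and $n$ independent messages $x_1,\dots,x_n$, each a single bit uniformly distributed on $\{0,1\}$. Receiver $i$ knows $x_i$ a priori and requests a set of messages not containing $x_i$. The information-flow graph is the directed graph $\mathcal{G}=(\mathcal{V},\mathcal{A})$ with an arc $(j\to i)$ iff receiver $i$ requests $x_j$. There are $S$ senders; sender $s$ knows a subset $\mathcal{M}_s$ of the messages, and every message is known to some sender. An index code consists of, for each sender $s$, an encoding function mapping the messages in $\mathcal{M}_s$ to $\ell_s$ bits, and for each receiver $i$ a decoding function that, from all senders' outputs together with $x_i$, returns every message requested by $i$, for all message values; its length is $\sum_s \ell_s$. $\tilde{\ell}^*(\mathcal{G},\mathcal{U})$ is the minimum length of an index code for the instance. The message graph $\mathcal{U}$ is the undirected graph on $\mathcal{V}$ with an edge $\{i,j\}$ iff some sender knows both $x_i$ and $x_j$. A leaf vertex of $\mathcal{G}$ has no outgoing arcs; $V_{\mathrm{out}}(\mathcal{G})$ is the number of non-leaf vertices; $j$ is a predecessor of $i$ iff there is a directed path in $\mathcal{G}$ from $j$ to $i$. A leaf SCC is a strongly connected component of $\mathcal{G}$ with at least two vertices and no arc from it to a vertex outside it. For a vertex set $\mathcal{S}$, a vertex $i\notin\mathcal{S}$ is a neighbor of $\mathcal{S}$ iff $\mathcal{U}$ has an edge between $i$ and some vertex of $\mathcal{S}$. A leaf SCC with vertex set $\mathcal{V}_S$ is message-connected iff the subgraph of $\mathcal{U}$ induced by $\mathcal{V}_S$ is connected; message-disconnected iff two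 vertices of $\mathcal{V}_S$ are joined by no path in $\mathcal{U}$; semi-message-connected otherwise. A semi-message-connected leaf SCC is degenerated iff there exist $\mathcal{V}_{\mathrm{inside}}\subsetneq\mathcal{V}_S$ and $\mathcal{V}_{\mathrm{outside}}\subseteq\mathcal{V}\setminus\mathcal{V}_S$ such that: $\mathcal{U}$ has no edge between $\mathcal{V}_{\mathrm{inside}}$ and $\mathcal{V}_S\setminus\mathcal{V}_{\mathrm{inside}}$; $\mathcal{V}_{\mathrm{outside}}$ contains at most one non-leaf vertex of $\mathcal{G}$; and every neighbor of $\mathcal{V}_{\mathrm{inside}}$ is either in $\mathcal{V}_{\mathrm{outside}}$ or a predecessor in $\mathcal{G}$ of some vertex of $\mathcal{V}_{\mathrm{outside}}$. These $\mathcal{V}_{\mathrm{inside}},\mathcal{V}_{\mathrm{outside}}$ are called witnessing sets. *)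

theory Defs
  imports Main
begin

text \<open>Vertices / receivers / messages are 0..<n. The information-flow graph is an arc
relation A :: (nat \<times> nat) set, with (j,i) \<in> A iff receiver i requests x_j.
Senders are 0..<S, sender s knows the messages M s.\<close>

definition valid_instance :: "nat \<Rightarrow> (nat \<times> nat) set \<Rightarrow> nat \<Rightarrow> (nat \<Rightarrow> nat set) \<Rightarrow> bool" where
  "valid_instance n A S M \<longleftrightarrow>
     A \<subseteq> {0..<n} \<times> {0..<n} \<and> (\<forall>i. (i, i) \<notin> A) \<and>
     (\<forall>s<S. M s \<subseteq> {0..<n}) \<and> (\<forall>k<n. \<exists>s<S. k \<in> M s)"

text \<open>An index code: sender s outputs E s x, a bit list of length l s depending only on
the messages in M s; receiver i, from all senders' outputs and its own x_i, decodes
(via D i) every message it requests.\<close>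

definition is_index_code ::
  "nat \<Rightarrow> (nat \<times> nat) set \<Rightarrow> nat \<Rightarrow> (nat \<Rightarrow> nat set) \<Rightarrow> (nat \<Rightarrow> nat)
   \<Rightarrow> (nat \<Rightarrow> (nat \<Rightarrow> bool) \<Rightarrow> bool list)
   \<Rightarrow> (nat \<Rightarrow> (nat \<Rightarrow> bool list) \<Rightarrow> bool \<Rightarrow> nat \<Rightarrow> bool) \<Rightarrow> bool" where
  "is_index_code n A S M l E D \<longleftrightarrow>
     (\<forall>s<S. \<forall>x. length (E s x) = l s) \<and>
     (\<forall>s<S. \<forall>x y. (\<forall>k\<in>M s. x k = y k) \<longrightarrow> E s x = E s y) \<and>
     (\<forall>i<n. \<forall>x. \<forall>j. (j, i) \<in> A \<longrightarrow>
        D i (\<lambda>s. if s < S then E s x else []) (x i) j = x j)"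

definition code_length_achievable ::
  "nat \<Rightarrow> (nat \<times> nat) set \<Rightarrow> nat \<Rightarrow> (nat \<Rightarrow> nat set) \<Rightarrow> nat \<Rightarrow> bool" where
  "code_length_achievable n A S M L \<longleftrightarrow>
     (\<exists>l E D. is_index_code n A S M l E D \<and> (\<Sum>s<S. l s) = L)"

definition min_code_length :: "nat \<Rightarrow> (nat \<times> nat) set \<Rightarrow> nat \<Rightarrow> (nat \<Rightarrow> nat set) \<Rightarrow> nat" where
  "min_code_length n A S M = (LEAST L. code_length_achievable n A S M L)"

definition msg_edge :: "nat \<Rightarrow> (nat \<Rightarrow> nat set) \<Rightarrow> nat \<Rightarrow> nat \<Rightarrow> bool" where
  "msg_edge S M i j \<longleftrightarrow> i \<noteq> j \<and> (\<exists>s<S. i \<in> M s \<and> j \<in> M s)"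

definition scc :: "(nat \<times> nat) set \<Rightarrow> nat \<Rightarrow> nat set" where
  "scc A v = {u. (v, u) \<in> A\<^sup>* \<and> (u, v) \<in> A\<^sup>*}"

definition is_leaf_scc :: "nat \<Rightarrow> (nat \<times> nat) set \<Rightarrow> nat set \<Rightarrow> bool" where
  "is_leaf_scc n A C \<longleftrightarrow>
     (\<exists>v\<in>{0..<n}. C = scc A v) \<and> card C \<ge> 2 \<and>
     (\<forall>a b. (a, b) \<in> A \<longrightarrow> a \<in> C \<longrightarrow> b \<in> C)"

definition num_leaf_scc :: "nat \<Rightarrow> (nat \<times> nat) set \<Rightarrow> nat" where
  "num_leaf_scc n A = card {C. is_leaf_scc n A C}"

definition is_leaf :: "(nat \<times> nat) set \<Rightarrow> nat \<Rightarrow> bool" where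
  "is_leaf A v \<longleftrightarrow> (\<forall>u. (v, u) \<notin> A)"

definition V_out :: "nat \<Rightarrow> (nat \<times> nat) set \<Rightarrow> nat" where
  "V_out n A = card {v\<in>{0..<n}. \<not> is_leaf A v}"

definition is_pred :: "(nat \<times> nat) set \<Rightarrow> nat \<Rightarrow> nat \<Rightarrow> bool" where
  "is_pred A j i \<longleftrightarrow> (j, i) \<in> A\<^sup>+"

definition is_neighbor :: "nat \<Rightarrow> (nat \<Rightarrow> nat set) \<Rightarrow> nat set \<Rightarrow> nat \<Rightarrow> bool" where
  "is_neighbor S M X i \<longleftrightarrow> i \<notin> X \<and> (\<exists>x\<in>X. msg_edge S M i x)"

definition connected_in :: "nat \<Rightarrow> (nat \<Rightarrow> nat set) \<Rightarrow> nat set \<Rightarrow> nat \<Rightarrow> nat \<Rightarrow> bool" where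
  "connected_in S M X a b \<longleftrightarrow>
     (a, b) \<in> {(i, j). i \<in> X \<and> j \<in> X \<and> msg_edge S M i j}\<^sup>*"

definition message_connected :: "nat \<Rightarrow> (nat \<Rightarrow> nat set) \<Rightarrow> nat set \<Rightarrow> bool" where
  "message_connected S M C \<longleftrightarrow> (\<forall>a\<in>C. \<forall>b\<in>C. connected_in S M C a b)"

definition message_disconnected :: "nat \<Rightarrow> nat \<Rightarrow> (nat \<Rightarrow> nat set) \<Rightarrow> nat set \<Rightarrow> bool" where
  "message_disconnected n S M C \<longleftrightarrow>
     (\<exists>a\<in>C. \<exists>b\<in>C. \<not> connected_in S M {0..<n} a b)"

definition semi_message_connected :: "nat \<Rightarrow> nat \<Rightarrow> (nat \<Rightarrow> nat set) \<Rightarrow> nat set \<Rightarrow> bool" where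
  "semi_message_connected n S M C \<longleftrightarrow>
     \<not> message_connected S M C \<and> \<not> message_disconnected n S M C"

definition witnessing_sets ::
  "nat \<Rightarrow> (nat \<times> nat) set \<Rightarrow> nat \<Rightarrow> (nat \<Rightarrow> nat set) \<Rightarrow> nat set \<Rightarrow> nat set \<Rightarrow> nat set \<Rightarrow> bool" where
  "witnessing_sets n A S M C Vin Vout \<longleftrightarrow>
     Vin \<subset> C \<and> Vout \<subseteq> {0..<n} - C \<and>
     (\<forall>a\<in>Vin. \<forall>b\<in>C - Vin. \<not> msg_edge S M a b) \<and>
     card {v\<in>Vout. \<not> is_leaf A v} \<le> 1 \<and>
     (\<forall>i. is_neighbor S M Vin i \<longrightarrow> i \<in> Vout \<or> (\<exists>w\<in>Vout. is_pred A i w))"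

definition degenerated_leaf_scc ::
  "nat \<Rightarrow> (nat \<times> nat) set \<Rightarrow> nat \<Rightarrow> (nat \<Rightarrow> nat set) \<Rightarrow> nat set \<Rightarrow> bool" where
  "degenerated_leaf_scc n A S M C \<longleftrightarrow>
     is_leaf_scc n A C \<and> semi_message_connected n S M C \<and>
     (\<exists>Vin Vout. witnessing_sets n A S M C Vin Vout)"

end

theory Submission
  imports Defs
begin

lemma chain:
  assumes code: "is_index_code n A S M l E D"
    and Ar: "A \<subseteq> {0..<n} \<times> {0..<n}"
    and cw: "(\<lambda>s. if s < S then E s x else []) = (\<lambda>s. if s < S then E s x' else [])"
    and p: "(j, i) \<in> A\<^sup>*" and eq: "x i = x' i"
  shows "x j = x' j"
  using p eq
proof (induction rule: converse_rtrancl_induct)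
  case base then show ?case by simp
next
  case (step y z)
  then have zn: "z < n" using Ar by auto
  have xz: "x z = x' z" using step by blast
  have dec: "\<forall>i<n. \<forall>x. \<forall>j. (j, i) \<in> A \<longrightarrow> D i (\<lambda>s. if s < S then E s x else []) (x i) j = x j"
    using code[unfolded is_index_code_def, THEN conjunct2, THEN conjunct2] .
  have "x y = D z (\<lambda>s. if s < S then E s x else []) (x z) y" using dec zn step(1) by metis
  also have "\<dots> = D z (\<lambda>s. if s < S then E s x' else []) (x' z) y" using cw xz by simp
  also have "\<dots> = x' y" using dec zn step(1) by metis
  finally show ?case .
qed

lemma scc_same: "u \<in> scc B v \<Longrightarrow> scc B u = scc B v"
  unfolding scc_def by (blast intro: rtrancl_trans)

lemma scc_self: "v \<in> scc B v"
  unfolding scc_def by blast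

lemma closed_reach:
  assumes "(u, x) \<in> B\<^sup>*" "u \<in> D" "\<forall>a b. (a, b) \<in> B \<longrightarrow> a \<in> D \<longrightarrow> b \<in> D"
  shows "x \<in> D"
  using assms by (induction rule: rtrancl_induct) blast+

lemma reach_restrict:
  assumes "(u, x) \<in> (insert (p, q) B)\<^sup>*" "u \<in> D"
    "\<forall>a b. (a, b) \<in> insert (p, q) B \<longrightarrow> a \<in> D \<longrightarrow> b \<in> D" "p \<notin> D"
  shows "(u, x) \<in> B\<^sup>* \<and> x \<in> D"
  using assms
proof (induction rule: rtrancl_induct)
  case base then show ?case by simp
next
  case (step y z)
  then have "(u, y) \<in> B\<^sup>*" "y \<in> D" by auto
  moreover have "(y, z) \<in> B" using step \<open>y \<in> D\<close> by auto
  ultimately show ?case using step by (meson rtrancl.rtrancl_into_rtrancl)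
qed

lemma scc_range:
  assumes "B \<subseteq> {0..<n} \<times> {0..<n}" "v < n"
  shows "scc B v \<subseteq> {0..<n}"
proof
  fix u assume "u \<in> scc B v"
  then have "(v, u) \<in> B\<^sup>*" unfolding scc_def by blast
  then show "u \<in> {0..<n}" using assms by (induction rule: rtrancl_induct) auto
qed

lemma finite_leaf_sccs:
  assumes "B \<subseteq> {0..<n} \<times> {0..<n}"
  shows "finite {D. is_leaf_scc n B D}"
proof (rule finite_subset)
  show "{D. is_leaf_scc n B D} \<subseteq> Pow {0..<n}"
    using scc_range[OF assms] unfolding is_leaf_scc_def by fastforce
qed simp

lemma code_mono:
  assumes sub: "A \<subseteq> A'" and code: "is_index_code n A' S M l E D"
  shows "is_index_code n A S M l E D"
proof -
  have 1: "\<forall>s<S. \<forall>x. length (E s x) = l s"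
    using code[unfolded is_index_code_def, THEN conjunct1] .
  have 2: "\<forall>s<S. \<forall>x y. (\<forall>k\<in>M s. x k = y k) \<longrightarrow> E s x = E s y"
    using code[unfolded is_index_code_def, THEN conjunct2, THEN conjunct1] .
  have 3: "\<forall>i<n. \<forall>x. \<forall>j. (j, i) \<in> A' \<longrightarrow> D i (\<lambda>s. if s < S then E s x else []) (x i) j = x j"
    using code[unfolded is_index_code_def, THEN conjunct2, THEN conjunct2] .
  have 4: "\<forall>i<n. \<forall>x. \<forall>j. (j, i) \<in> A \<longrightarrow> D i (\<lambda>s. if s < S then E s x else []) (x i) j = x j"
  proof (intro allI impI)
    fix i x j assume "i < n" "(j, i) \<in> A"
    then show "D i (\<lambda>s. if s < S then E s x else []) (x i) j = x j"
      using 3 sub by auto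
  qed
  show ?thesis unfolding is_index_code_def by (intro conjI 1 2 4)
qed

theorem proposition2:
  fixes n S :: nat and A :: "(nat \<times> nat) set" and M :: "nat \<Rightarrow> nat set"
    and C Vin Vout :: "nat set" and v_in t :: nat
  assumes inst: "valid_instance n A S M"
    and degen: "degenerated_leaf_scc n A S M C"
    and wit: "witnessing_sets n A S M C Vin Vout"
    and vin: "v_in \<in> Vin"
    and tgt: "t \<in> Vout" "\<forall>w\<in>Vout. \<not> is_leaf A w \<longrightarrow> w = t"
  shows "(num_leaf_scc n (insert (v_in, t) A) = num_leaf_scc n A \<or>
          num_leaf_scc n (insert (v_in, t) A) = num_leaf_scc n A - 1) \<and>
         min_code_length n (insert (v_in, t) A) S M = min_code_length n A S M \<and>
         V_out n (insert (v_in, t) A) = V_out n A"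
proof -
  define A' where "A' = insert (v_in, t) A"
  from inst have Ar: "A \<subseteq> {0..<n} \<times> {0..<n}"
    unfolding valid_instance_def by auto
  from degen have lC: "is_leaf_scc n A C" unfolding degenerated_leaf_scc_def by auto
  then obtain v0 where v0: "v0 < n" "C = scc A v0" and cardC: "card C \<ge> 2"
    and closedC: "\<forall>a b. (a,b)\<in>A \<longrightarrow> a\<in>C \<longrightarrow> b\<in>C"
    unfolding is_leaf_scc_def by auto
  from wit have VinC: "Vin \<subset> C" and Vout: "Vout \<subseteq> {0..<n} - C"
    and nbr: "\<forall>i. is_neighbor S M Vin i \<longrightarrow> i \<in> Vout \<or> (\<exists>w\<in>Vout. is_pred A i w)"
    unfolding witnessing_sets_def by auto
  have vC: "v_in \<in> C" using vin VinC by auto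
  have tn: "t < n" "t \<notin> C" using tgt(1) Vout by auto
  have vn: "v_in < n" using vC v0 scc_range[OF Ar v0(1)] by auto
  obtain r where r: "r \<in> C" "r \<notin> Vin" using VinC by auto
  have reach: "(v_in, r) \<in> A\<^sup>*" using vC r(1) v0(2) unfolding scc_def
    by (blast intro: rtrancl_trans)

  define L where "L = {w\<in>Vout. is_leaf A w \<and> w \<noteq> t}"
  have vinL: "v_in \<notin> L" using vC Vout L_def by auto
  have tL: "t \<notin> L" by (simp add: L_def)
  have key: "z v_in = y0 v_in"
    if code: "is_index_code n A S M l E D"
      and cw: "(\<lambda>s. if s < S then E s z else []) = (\<lambda>s. if s < S then E s y0 else [])"
      and zt: "z t = y0 t" and zL: "\<forall>w\<in>L. z w = y0 w" for l E D z y0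
  proof -
    have agreeVout: "z w = y0 w" if "w \<in> Vout" for w
    proof (cases "w = t")
      case True then show ?thesis using zt by simp
    next
      case False
      then have "is_leaf A w" using tgt(2) that by blast
      then have "w \<in> L" using False that by (simp add: L_def)
      then show ?thesis using zL by blast
    qed
    have agreeP: "z m = y0 m" if "m \<in> Vout \<or> (\<exists>w\<in>Vout. is_pred A m w)" for m
      using that
    proof
      assume "m \<in> Vout" then show ?thesis by (rule agreeVout)
    next
      assume "\<exists>w\<in>Vout. is_pred A m w"
      then obtain w where w: "w \<in> Vout" "(m, w) \<in> A\<^sup>+" unfolding is_pred_def by auto
      then have "(m, w) \<in> A\<^sup>*" by auto
      then show ?thesis using chain[OF code Ar cw, of m w] agreeVout w(1) by auto
    qed
    define w' where "w' = (\<lambda>k. if k \<in> Vin then z k else y0 k)"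
    have loc: "\<forall>s<S. \<forall>x y. (\<forall>k\<in>M s. x k = y k) \<longrightarrow> E s x = E s y"
      using code[unfolded is_index_code_def, THEN conjunct2, THEN conjunct1] .
    have Es: "E s w' = E s y0" if sS: "s < S" for s
    proof (cases "\<exists>k\<in>M s. k \<in> Vin")
      case True
      then obtain k where k: "k \<in> M s" "k \<in> Vin" by auto
      have "\<forall>m\<in>M s. w' m = z m"
      proof
        fix m assume m: "m \<in> M s"
        show "w' m = z m"
        proof (cases "m \<in> Vin")
          case True then show ?thesis by (simp add: w'_def)
        next
          case False
          then have "is_neighbor S M Vin m"
            unfolding is_neighbor_def msg_edge_def using k m sS by auto
          then have "z m = y0 m" using nbr agreeP by blast
          then show ?thesis using False by (simp add: w'_def)
        qed
      qed
      then have "E s w' = E s z" using loc sS by blast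
      also have "\<dots> = E s y0" using fun_cong[OF cw, of s] sS by simp
      finally show ?thesis .
    next
      case False
      then have "\<forall>m\<in>M s. w' m = y0 m" by (auto simp: w'_def)
      then show ?thesis using loc sS by blast
    qed
    have cw2: "(\<lambda>s. if s < S then E s w' else []) = (\<lambda>s. if s < S then E s y0 else [])"
      using Es by auto
    have "w' r = y0 r" using r(2) by (simp add: w'_def)
    then have "w' v_in = y0 v_in" using chain[OF code Ar cw2 reach] by blast
    then show ?thesis using vin by (simp add: w'_def)
  qed

  have fwd: "code_length_achievable n A' S M L0" if "code_length_achievable n A S M L0" for L0
  proof -
    from that obtain l E D where code: "is_index_code n A S M l E D" and sl: "(\<Sum>s<S. l s) = L0"
      unfolding code_length_achievable_def by blast
    define y where "y = (\<lambda>x::nat\<Rightarrow>bool. \<lambda>k. if k \<in> L then False else x k)"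
    define E' where "E' = (\<lambda>s x. E s (y x))"
    define D' where "D' = (\<lambda>i c b j. if i = t \<and> j = v_in then
         (SOME z. (\<lambda>s. if s < S then E s z else []) = c \<and> z t = b \<and> (\<forall>w\<in>L. z w = False)) v_in
         else if i \<in> L then D i c False j else D i c b j)"
    have len: "\<forall>s<S. \<forall>x. length (E s x) = l s"
      using code[unfolded is_index_code_def, THEN conjunct1] .
    have loc: "\<forall>s<S. \<forall>x y. (\<forall>k\<in>M s. x k = y k) \<longrightarrow> E s x = E s y"
      using code[unfolded is_index_code_def, THEN conjunct2, THEN conjunct1] .
    have c1: "\<forall>s<S. \<forall>x. length (E' s x) = l s"
      using len by (simp add: E'_def)
    have c2: "\<forall>s<S. \<forall>x x'. (\<forall>k\<in>M s. x k = x' k) \<longrightarrow> E' s x = E' s x'"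
    proof (intro allI impI)
      fix s and x x' :: "nat \<Rightarrow> bool" assume s: "s < S" and ag: "\<forall>k\<in>M s. x k = x' k"
      have "\<forall>k\<in>M s. y x k = y x' k" using ag by (simp add: y_def)
      then show "E' s x = E' s x'" using loc s unfolding E'_def by blast
    qed
    have dec: "\<forall>i<n. \<forall>x. \<forall>j. (j, i) \<in> A \<longrightarrow> D i (\<lambda>s. if s < S then E s x else []) (x i) j = x j"
      using code[unfolded is_index_code_def, THEN conjunct2, THEN conjunct2] .
    have c3: "\<forall>i<n. \<forall>x. \<forall>j. (j, i) \<in> A' \<longrightarrow> D' i (\<lambda>s. if s < S then E' s x else []) (x i) j = x j"
    proof (intro allI impI)
      fix i and x :: "nat \<Rightarrow> bool" and j assume i: "i < n" and ji: "(j, i) \<in> A'"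
      define c where "c = (\<lambda>s. if s < S then E s (y x) else [])"
      have c_eq: "(\<lambda>s. if s < S then E' s x else []) = c" unfolding E'_def c_def by (rule refl)
      show "D' i (\<lambda>s. if s < S then E' s x else []) (x i) j = x j"
      proof (cases "i = t \<and> j = v_in")
        case True
        then have it: "i = t" and jv: "j = v_in" by auto
        define P where "P = (\<lambda>z. (\<lambda>s. if s < S then E s z else []) = c \<and> z t = x i \<and> (\<forall>w\<in>L. z w = False))"
        have yt: "y x t = x i" using it tL by (simp add: y_def)
        have yL: "\<forall>w\<in>L. y x w = False" by (simp add: y_def)
        have ex: "P (y x)" unfolding P_def c_def using yt yL by blast
        define z where "z = (SOME z. P z)"
        have Pz: "P z" unfolding z_def by (rule someI[of P, OF ex])
        have "z v_in = y x v_in"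
          apply (rule key[OF code])
          using Pz it tL by (auto simp: y_def P_def c_def)
        then have "z v_in = x j" using jv vinL by (simp add: y_def)
        moreover have "D' i (\<lambda>s. if s < S then E' s x else []) (x i) j = z v_in"
          unfolding c_eq using True by (simp add: D'_def z_def P_def)
        ultimately show ?thesis by simp
      next
        case False
        have jiA: "(j,i) \<in> A" using ji False by (auto simp: A'_def)
        have jL: "j \<notin> L"
        proof
          assume "j \<in> L"
          then have "is_leaf A j" by (simp add: L_def)
          then show False using jiA by (simp add: is_leaf_def)
        qed
        have "D i c (y x i) j = y x j" using dec i jiA unfolding c_def by blast
        then show ?thesis using False jL unfolding c_eq by (auto simp: D'_def y_def split: if_splits)
      qed
    qed
    have "is_index_code n A' S M l E' D'"
      unfolding is_index_code_def by (intro conjI c1 c2 c3)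
    then show ?thesis unfolding code_length_achievable_def using sl by blast
  qed
  have bwd: "code_length_achievable n A S M L0" if "code_length_achievable n A' S M L0" for L0
  proof -
    from that obtain l E D where code: "is_index_code n A' S M l E D" and sl: "(\<Sum>s<S. l s) = L0"
      unfolding code_length_achievable_def by blast
    have "A \<subseteq> A'" by (auto simp: A'_def)
    then have "is_index_code n A S M l E D" using code by (rule code_mono)
    then show ?thesis unfolding code_length_achievable_def using sl by blast
  qed
  have "code_length_achievable n A' S M = code_length_achievable n A S M"
  proof (rule ext)
    fix L0 show "code_length_achievable n A' S M L0 = code_length_achievable n A S M L0"
      using fwd[of L0] bwd[of L0] by (rule iffI[rotated])
  qed
  then have min_eq: "min_code_length n A' S M = min_code_length n A S M"
    unfolding min_code_length_def by simp

  have vin_nonleaf: "\<not> is_leaf A v_in"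
  proof -
    have "\<not> C \<subseteq> {v_in}"
    proof
      assume "C \<subseteq> {v_in}"
      then have "card C \<le> card {v_in}" by (intro card_mono) auto
      then show False using cardC by simp
    qed
    then obtain u where u: "u \<in> C" "u \<noteq> v_in" by auto
    have "(v_in, u) \<in> A\<^sup>*" using vC u(1) v0(2) unfolding scc_def
      by (blast intro: rtrancl_trans)
    then obtain w where "(v_in, w) \<in> A" using u(2)
      by (metis converse_rtranclE)
    then show ?thesis by (auto simp: is_leaf_def)
  qed
  have "{v\<in>{0..<n}. \<not> is_leaf A' v} = {v\<in>{0..<n}. \<not> is_leaf A v}"
  proof -
    have "is_leaf A' v = is_leaf A v" for v
    proof (cases "v = v_in")
      case True
      have "\<not> is_leaf A' v_in" unfolding is_leaf_def A'_def by blast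
      then show ?thesis using True vin_nonleaf by simp
    next
      case False
      then show ?thesis unfolding is_leaf_def A'_def by blast
    qed
    then show ?thesis by simp
  qed
  then have vout_eq: "V_out n A' = V_out n A" unfolding V_out_def by simp

  have A'r: "A' \<subseteq> {0..<n} \<times> {0..<n}" unfolding A'_def using Ar tn(1) vn by simp
  define F where "F = {D. is_leaf_scc n A D}"
  define F' where "F' = {D. is_leaf_scc n A' D}"
  have finF: "finite F" unfolding F_def by (rule finite_leaf_sccs[OF Ar])
  have finF': "finite F'" unfolding F'_def by (rule finite_leaf_sccs[OF A'r])
  have CF: "C \<in> F" using lC by (simp add: F_def)
  have CF': "C \<notin> F'"
  proof
    assume "C \<in> F'"
    then have "\<forall>a b. (a,b)\<in>A' \<longrightarrow> a\<in>C \<longrightarrow> b\<in>C" by (simp add: F'_def is_leaf_scc_def)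
    then have "t \<in> C" using vC by (auto simp: A'_def)
    then show False using tn by simp
  qed
  have sub1: "F - {C} \<subseteq> F'"
  proof
    fix D assume D: "D \<in> F - {C}"
    then have "is_leaf_scc n A D" by (simp add: F_def)
    then obtain u where u: "u < n" "D = scc A u" and cD: "card D \<ge> 2"
      and clD: "\<forall>a b. (a,b)\<in>A \<longrightarrow> a\<in>D \<longrightarrow> b\<in>D"
      unfolding is_leaf_scc_def by auto
    have vD: "v_in \<notin> D"
    proof
      assume "v_in \<in> D"
      then have "D = scc A v_in" using u(2) scc_same by metis
      moreover have "C = scc A v_in" using vC v0(2) scc_same by metis
      ultimately show False using D by simp
    qed
    have clD': "\<forall>a b. (a,b)\<in>A' \<longrightarrow> a\<in>D \<longrightarrow> b\<in>D" using clD vD by (auto simp: A'_def)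
    have uD: "u \<in> D" using u(2) scc_self by metis
    have "scc A' u = D"
    proof
      show "scc A' u \<subseteq> D"
      proof
        fix x assume "x \<in> scc A' u"
        then have "(u, x) \<in> A'\<^sup>*" by (simp add: scc_def)
        then show "x \<in> D" using closed_reach uD clD' by metis
      qed
    next
      have "A\<^sup>* \<subseteq> A'\<^sup>*" by (rule rtrancl_mono) (auto simp: A'_def)
      then show "D \<subseteq> scc A' u" using u(2) unfolding scc_def by blast
    qed
    then show "D \<in> F'" using u(1) cD clD' unfolding F'_def is_leaf_scc_def by auto
  qed
  have sub2: "F' \<subseteq> insert (scc A' v_in) (F - {C})"
  proof
    fix D assume D: "D \<in> F'"
    then have "is_leaf_scc n A' D" by (simp add: F'_def)
    then obtain u where u: "u < n" "D = scc A' u" and cD: "card D \<ge> 2"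
      and clD': "\<forall>a b. (a,b)\<in>A' \<longrightarrow> a\<in>D \<longrightarrow> b\<in>D"
      unfolding is_leaf_scc_def by auto
    show "D \<in> insert (scc A' v_in) (F - {C})"
    proof (cases "v_in \<in> D")
      case True
      then have "D = scc A' v_in" using u(2) scc_same by metis
      then show ?thesis by simp
    next
      case False
      have uD: "u \<in> D" using u(2) scc_self by metis
      have clD: "\<forall>a b. (a,b)\<in>A \<longrightarrow> a\<in>D \<longrightarrow> b\<in>D" using clD' by (auto simp: A'_def)
      have "scc A u = D"
      proof
        show "D \<subseteq> scc A u"
        proof
          fix x assume xD: "x \<in> D"
          then have "(u, x) \<in> A'\<^sup>*" "(x, u) \<in> A'\<^sup>*" using u(2) by (auto simp: scc_def)
          then have "(u, x) \<in> A\<^sup>*" "(x, u) \<in> A\<^sup>*"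
            using reach_restrict[of u x v_in t A D] reach_restrict[of x u v_in t A D]
              uD xD clD' False unfolding A'_def by auto
          then show "x \<in> scc A u" by (simp add: scc_def)
        qed
      next
        have "A\<^sup>* \<subseteq> A'\<^sup>*" by (rule rtrancl_mono) (auto simp: A'_def)
        then show "scc A u \<subseteq> D" using u(2) unfolding scc_def by blast
      qed
      then have "D \<in> F" using u(1) cD clD unfolding F_def is_leaf_scc_def by auto
      moreover have "D \<noteq> C" using D CF' by auto
      ultimately show ?thesis by simp
    qed
  qed
  have cardD: "card (F - {C}) = card F - 1" using CF finF by simp
  have le1: "card (F - {C}) \<le> card F'" using sub1 finF' by (rule card_mono[rotated])
  have le2: "card F' \<le> card (F - {C}) + 1"
  proof -
    have "card F' \<le> card (insert (scc A' v_in) (F - {C}))"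
      using sub2 finF by (intro card_mono) auto
    also have "\<dots> \<le> card (F - {C}) + 1" by (simp add: card_insert_le_m1)
    finally show ?thesis .
  qed
  have pos: "card F \<ge> 1" using CF finF by (metis One_nat_def Suc_leI card_gt_0_iff empty_iff)
  have num: "num_leaf_scc n A' = num_leaf_scc n A \<or> num_leaf_scc n A' = num_leaf_scc n A - 1"
    unfolding num_leaf_scc_def using le1 le2 cardD pos unfolding F_def F'_def by linarith
  show ?thesis using num min_eq vout_eq unfolding A'_def by blast
qed

end
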